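(* Fix $k\ge2$ and let $Z^{(1)},\dots,Z^{(k)}$ be independent copies of $Z$. Assume $\mathbb{E}\min_{1\le i\le k}Z^{(i)}=\infty$. Then, in the $k$-choice model, with probability one, $\liminf_{n\to\infty}\Lambda_n<\infty$.
   Context: Let $Z$ be a random variable on $\mathbb{N}=\{1,2,3,\dots\}$. Fix $k\ge2$ and let $(Z^{(1)}_n)_{n\ge1},\dots,(Z^{(k)}_n)_{n\ge1}$ be $k$ independent sequences of i.i.d. random variables, all distributed as $Z$ and mutually independent. The $k$-choice model: define $T_n=\{n\}$ for $n\le0$ and $T_n=\{n\}\cup\bigcup_{i=1}^k T_{n-Z^{(i)}_n}$ for $n\ge1$. Let $\mathcal{L}_n=T_n\cap\{0,-1,-2,\dots\}$ and $\Lambda_n=|\mathcal{L}_n|$. *)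

theory Defs
  imports "HOL-Probability.Probability"
begin

text \<open>The sample is encoded as z i m = Z^{(i+1)}_m for i < k, m \<ge> 1.
  T_n is the least set containing n and closed under passing from a node m \<ge> 1
  to its children m - Z^{(i)}_m; for Z \<ge> 1 this is exactly the recursive definition
  T_n = {n} for n \<le> 0 and T_n = {n} \<union> \<Union>_i T_{n - Z^{(i)}_n} for n \<ge> 1.\<close>

inductive_set kTree :: "nat \<Rightarrow> (nat \<Rightarrow> nat \<Rightarrow> nat) \<Rightarrow> int \<Rightarrow> int set"
  for k :: nat and z :: "nat \<Rightarrow> nat \<Rightarrow> nat" and n :: int where
  root: "n \<in> kTree k z n"
| step: "m \<in> kTree k z n \<Longrightarrow> m \<ge> 1 \<Longrightarrow> i < k \<Longrightarrow> m - int (z i (nat m)) \<in> kTree k z n"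

definition kLeaves :: "nat \<Rightarrow> (nat \<Rightarrow> nat \<Rightarrow> nat) \<Rightarrow> int \<Rightarrow> int set" where
  "kLeaves k z n = kTree k z n \<inter> {..0}"

definition kLambda :: "nat \<Rightarrow> (nat \<Rightarrow> nat \<Rightarrow> nat) \<Rightarrow> int \<Rightarrow> nat" where
  "kLambda k z n = card (kLeaves k z n)"

end

theory Submission imports Defs begin

lemma tree_small:
  fixes z :: "nat \<Rightarrow> nat \<Rightarrow> nat" and n :: nat
  assumes "n \<ge> 1" "\<forall>i<k. n < z i n"
  shows "kLambda k z (int n) \<le> k"
proof -
  let ?S = "(\<lambda>i. int n - int (z i n)) ` {..<k}"
  have sub: "m \<in> insert (int n) ?S" if "m \<in> kTree k z (int n)" for m
    using that
  proof induction
    case root then show ?case by simp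
  next
    case (step m i)
    have "m = int n"
    proof (rule ccontr)
      assume "m \<noteq> int n"
      then obtain j where "j < k" "m = int n - int (z j n)" using step by auto
      with assms(2) have "m < 0" by force
      with step show False by simp
    qed
    then show ?case using step by auto
  qed
  have "kLeaves k z (int n) \<subseteq> ?S"
    using sub assms(1) unfolding kLeaves_def by force
  then have "card (kLeaves k z (int n)) \<le> card ?S" by (intro card_mono) auto
  also have "\<dots> \<le> k" using card_image_le[of "{..<k}"] by simp
  finally show ?thesis unfolding kLambda_def .
qed

lemma nat_as_sum: "ennreal (real (m::nat)) = (\<Sum>n. of_bool (n < m))"
proof -
  have "(\<Sum>n. (of_bool (n < m) :: ennreal)) = (\<Sum>n\<in>{..<m}. of_bool (n < m))"
    by (rule suminf_finite) auto
  also have "\<dots> = (\<Sum>n\<in>{..<m}. 1)" by (intro sum.cong) auto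
  finally show ?thesis by (simp add: ennreal_of_nat_eq_real_of_nat)
qed

lemma integral_min:
  fixes p :: "nat pmf" and k :: nat
  assumes "k \<ge> 1"
  shows "(\<integral>\<^sup>+ x. ennreal (real (Min (x ` {..<k}))) \<partial>measure_pmf (Pi_pmf {..<k} 1 (\<lambda>_. p)))
     = (\<Sum>n. ennreal (measure_pmf.prob p {n<..} ^ k))"
proof -
  let ?P = "Pi_pmf {..<k} 1 (\<lambda>_. p)"
  have "(\<integral>\<^sup>+ x. ennreal (real (Min (x ` {..<k}))) \<partial>measure_pmf ?P)
     = (\<integral>\<^sup>+ x. (\<Sum>n. indicator {x::nat\<Rightarrow>nat. n < Min (x ` {..<k})} x) \<partial>measure_pmf ?P)"
    by (simp only: nat_as_sum) (simp add: indicator_def)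
  also have "\<dots> = (\<Sum>n. \<integral>\<^sup>+ x. indicator {x::nat\<Rightarrow>nat. n < Min (x ` {..<k})} x \<partial>measure_pmf ?P)"
    by (rule nn_integral_suminf) simp
  also have "\<dots> = (\<Sum>n. ennreal (measure_pmf.prob p {n<..} ^ k))"
  proof (intro suminf_cong)
    fix n :: nat
    have eq: "{x::nat\<Rightarrow>nat. n < Min (x ` {..<k})} = Pi {..<k} (\<lambda>_. {n<..})"
    proof -
      have ne: "{..<k} \<noteq> {}" using assms by (auto simp: lessThan_empty_iff)
      show ?thesis using ne by (auto simp: Pi_def Min_gr_iff)
    qed
    have "(\<integral>\<^sup>+ x. indicator {x::nat\<Rightarrow>nat. n < Min (x ` {..<k})} x \<partial>measure_pmf ?P)
        = emeasure (measure_pmf ?P) (Pi {..<k} (\<lambda>_. {n<..}))"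
      by (simp add: eq)
    also have "\<dots> = ennreal (measure_pmf.prob ?P (Pi {..<k} (\<lambda>_. {n<..})))"
      by (simp add: measure_pmf.emeasure_eq_measure)
    also have "measure_pmf.prob ?P (Pi {..<k} (\<lambda>_. {n<..})) = measure_pmf.prob p {n<..} ^ k"
      by (simp add: measure_Pi_pmf_Pi)
    finally show "(\<integral>\<^sup>+ x. indicator {x::nat\<Rightarrow>nat. n < Min (x ` {..<k})} x \<partial>measure_pmf ?P) =
         ennreal (measure_pmf.prob p {n<..} ^ k)" .
  qed
  finally show ?thesis .
qed

lemma (in prob_space) bc2:
  fixes E :: "nat \<Rightarrow> 'a set"
  assumes ev: "\<And>n. n \<ge> 1 \<Longrightarrow> E n \<in> events"
  and ind: "\<And>J. J \<noteq> {} \<Longrightarrow> finite J \<Longrightarrow> J \<subseteq> {1..} \<Longrightarrow>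
     prob (\<Inter>n\<in>J. space M - E n) = (\<Prod>n\<in>J. 1 - prob (E n))"
  and ns: "\<not> summable (\<lambda>n. prob (E n))"
  shows "AE \<omega> in M. \<forall>N. \<exists>n\<ge>N. n \<ge> 1 \<and> \<omega> \<in> E n"
proof -
  define a where "a n = prob (E n)" for n
  have a0: "0 \<le> a n" for n by (simp add: a_def)
  define B where "B N = (\<Inter>n\<in>{max 1 N..}. space M - E n)" for N
  have Bev: "B N \<in> events" for N
    unfolding B_def using ev by (intro sets.countable_INT') auto
  have B0: "prob (B N) = 0" for N
  proof (rule ccontr)
    assume "prob (B N) \<noteq> 0"
    then have cpos: "prob (B N) > 0" using measure_nonneg[of M "B N"] by linarith
    define N' where "N' = max 1 N"
    have bnd: "(\<Sum>n\<in>{N'..m}. a n) \<le> - ln (prob (B N))" for m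
    proof (cases "N' \<le> m")
      case False
      then have "{N'..m} = {}" by auto
      moreover have "prob (B N) \<le> 1" by simp
      ultimately show ?thesis using cpos by simp
    next
      case True
      have "B N \<subseteq> (\<Inter>n\<in>{N'..m}. space M - E n)"
        unfolding B_def N'_def by auto
      then have "prob (B N) \<le> prob (\<Inter>n\<in>{N'..m}. space M - E n)"
        using True ev by (intro finite_measure_mono) (auto simp: N'_def)
      also have "\<dots> = (\<Prod>n\<in>{N'..m}. 1 - a n)"
        unfolding a_def using True by (intro ind) (auto simp: N'_def)
      also have "\<dots> \<le> (\<Prod>n\<in>{N'..m}. exp (- a n))"
      proof (intro prod_mono conjI)
        fix n show "0 \<le> 1 - a n" by (simp add: a_def)
        show "1 - a n \<le> exp (- a n)" using exp_ge_add_one_self[of "- a n"] by simp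
      qed
      also have "\<dots> = exp (- (\<Sum>n\<in>{N'..m}. a n))"
        by (simp add: exp_sum[symmetric] sum_negf)
      finally have "ln (prob (B N)) \<le> - (\<Sum>n\<in>{N'..m}. a n)"
        using cpos by (metis ln_exp ln_le_cancel_iff exp_gt_zero)
      then show ?thesis by simp
    qed
    have "summable a"
    proof (rule summableI_nonneg_bounded)
      show "0 \<le> a n" for n by (rule a0)
      fix m
      have "(\<Sum>n<m. a n) \<le> (\<Sum>n\<in>{..<N'} \<union> {N'..m}. a n)"
        by (intro sum_mono2) (auto simp: a0)
      also have "\<dots> = (\<Sum>n<N'. a n) + (\<Sum>n\<in>{N'..m}. a n)"
        by (intro sum.union_disjoint) auto
      also have "\<dots> \<le> (\<Sum>n<N'. a n) + - ln (prob (B N))"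
        using bnd by simp
      finally show "(\<Sum>n<m. a n) \<le> (\<Sum>n<N'. a n) + - ln (prob (B N))" .
    qed
    with ns show False by (simp add: a_def[abs_def])
  qed
  have null: "(\<Union>N. B N) \<in> null_sets M"
    using B0 Bev by (intro null_sets_UN) (simp add: null_sets_def emeasure_eq_measure)
  show ?thesis
  proof (rule AE_I'[OF null])
    show "{x \<in> space M. \<not> (\<forall>N. \<exists>n\<ge>N. 1 \<le> n \<and> x \<in> E n)} \<subseteq> (\<Union>N. B N)"
    proof
      fix x assume "x \<in> {x \<in> space M. \<not> (\<forall>N. \<exists>n\<ge>N. 1 \<le> n \<and> x \<in> E n)}"
      then obtain N where "x \<in> space M" "\<forall>n\<ge>N. 1 \<le> n \<longrightarrow> x \<notin> E n" by auto
      then have "x \<in> B N" unfolding B_def by auto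
      then show "x \<in> (\<Union>N. B N)" by auto
    qed
  qed
qed


theorem mainTheorem15:
  fixes M :: "'a measure" and p :: "nat pmf" and k :: nat
    and X :: "nat \<Rightarrow> nat \<Rightarrow> 'a \<Rightarrow> nat"
  assumes "prob_space M"
    and "k \<ge> 2"
    and "0 \<notin> set_pmf p"
    and "\<And>i n. i < k \<Longrightarrow> n \<ge> 1 \<Longrightarrow> X i n \<in> measurable M (count_space UNIV)"
    and "\<And>i n. i < k \<Longrightarrow> n \<ge> 1 \<Longrightarrow> distr M (count_space UNIV) (X i n) = measure_pmf p"
    and "prob_space.indep_vars M (\<lambda>_. count_space UNIV) (\<lambda>(i, n). X i n) ({..<k} \<times> {1..})"
    and "(\<integral>\<^sup>+ x. ennreal (real (Min (x ` {..<k}))) \<partial>measure_pmf (Pi_pmf {..<k} 1 (\<lambda>_. p))) = \<infinity>"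
  shows "AE \<omega> in M. liminf (\<lambda>n::nat. ereal (real (kLambda k (\<lambda>i m. X i m \<omega>) (int n)))) < \<infinity>"
proof -
  interpret prob_space M by fact
  note meas = assms(4) and dist = assms(5) and indep = assms(6)
  define X' where "X' = (\<lambda>(i, n). X i n)"
  define q where "q n = measure_pmf.prob p {n<..}" for n
  define E where "E n = {\<omega>\<in>space M. \<forall>i<k. n < X i n \<omega>}" for n
  define K where "K n = {..<k} \<times> {n}" for n :: nat
  define A where "A = (\<lambda>(i::nat, m::nat). {m<..})"
  have kne: "{..<k} \<noteq> {}" using assms(2) by (auto simp: lessThan_empty_iff)
  have Kne: "K n \<noteq> {}" for n using kne by (auto simp: K_def)
  have cardK: "card (K n) = k" for n by (simp add: K_def card_cartesian_product)
  have EK: "E n = (\<Inter>j\<in>K n. X' j -` A j \<inter> space M)" for n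
    using Kne[of n] by (auto simp: E_def K_def X'_def A_def)
  have Eev: "E n \<in> events" if "n \<ge> 1" for n
    unfolding EK using Kne[of n] that meas
    by (intro sets.finite_INT) (auto simp: K_def X'_def A_def)
  have probX: "prob (X' j -` A j \<inter> space M) = q n" if jK: "j \<in> K n" and n1: "n \<ge> 1" for j n
  proof -
    obtain i where j: "j = (i, n)" "i < k" using jK unfolding K_def by blast
    have "prob (X' j -` A j \<inter> space M) = measure (distr M (count_space UNIV) (X i n)) {n<..}"
      using j n1 meas by (subst measure_distr) (auto simp: X'_def A_def)
    also have "\<dots> = q n" using dist j n1 by (simp add: q_def)
    finally show ?thesis .
  qed
  have probE: "prob (E n) = q n ^ k" if "n \<ge> 1" for n
  proof -
    have "prob (E n) = (\<Prod>j\<in>K n. prob (X' j -` A j \<inter> space M))"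
      unfolding EK X'_def using Kne[of n] that
      by (intro indep_varsD[OF indep]) (auto simp: K_def A_def)
    also have "\<dots> = (\<Prod>j\<in>K n. q n)" using probX that by (intro prod.cong) auto
    also have "\<dots> = q n ^ k" by (simp add: cardK)
    finally show ?thesis .
  qed
  have ind2: "indep_vars (\<lambda>n. PiM (K n) (\<lambda>_. count_space UNIV))
      (\<lambda>n \<omega>. restrict (\<lambda>j. X' j \<omega>) (K n)) {1..}"
    using indep unfolding X'_def
    by (intro indep_vars_restrict) (auto simp: K_def disjoint_family_on_def)
  have indE: "prob (\<Inter>n\<in>J. space M - E n) = (\<Prod>n\<in>J. 1 - prob (E n))"
    if J: "J \<noteq> {}" "finite J" "J \<subseteq> {1..}" for J
  proof -
    define C where "C n = space (PiM (K n) (\<lambda>_. count_space UNIV :: nat measure)) - PiE (K n) A" for n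
    have pre: "(\<lambda>\<omega>. restrict (\<lambda>j. X' j \<omega>) (K n)) -` C n \<inter> space M = space M - E n" for n
      by (auto simp: C_def E_def K_def X'_def A_def space_PiM restrict_PiE_iff Pi_iff)
    have "prob (\<Inter>n\<in>J. space M - E n)
        = prob (\<Inter>n\<in>J. (\<lambda>\<omega>. restrict (\<lambda>j. X' j \<omega>) (K n)) -` C n \<inter> space M)"
      by (simp add: pre)
    also have "\<dots> = (\<Prod>n\<in>J. prob ((\<lambda>\<omega>. restrict (\<lambda>j. X' j \<omega>) (K n)) -` C n \<inter> space M))"
    proof (rule indep_varsD[OF ind2 J])
      fix n assume "n \<in> J"
      show "C n \<in> sets (PiM (K n) (\<lambda>_. count_space UNIV))"
        unfolding C_def by (intro sets.compl_sets sets_PiM_I_finite) (auto simp: K_def)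
    qed
    also have "\<dots> = (\<Prod>n\<in>J. 1 - prob (E n))"
      using J Eev by (intro prod.cong) (auto simp: pre prob_compl)
    finally show ?thesis .
  qed
  have ns: "\<not> summable (\<lambda>n. prob (E n))"
  proof
    assume "summable (\<lambda>n. prob (E n))"
    moreover have "eventually (\<lambda>n. prob (E n) = q n ^ k) sequentially"
      using probE by (auto simp: eventually_sequentially)
    ultimately have s: "summable (\<lambda>n. q n ^ k)" using summable_cong[of "\<lambda>n. prob (E n)" "\<lambda>n. q n ^ k"] by blast
    have "(\<Sum>n. ennreal (q n ^ k)) = ennreal (\<Sum>n. q n ^ k)"
      using s by (intro suminf_ennreal2) (auto simp: q_def)
    moreover have "(\<Sum>n. ennreal (q n ^ k)) = \<infinity>"
    proof -
      have "k \<ge> 1" using assms(2) by simp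
      from integral_min[OF this, of p] assms(7) show ?thesis unfolding q_def by simp
    qed
    ultimately show False by simp
  qed
  have AE: "AE \<omega> in M. \<forall>N. \<exists>n\<ge>N. n \<ge> 1 \<and> \<omega> \<in> E n"
    by (rule bc2[OF Eev indE ns])
  show ?thesis
  proof (rule AE_mp[OF AE], rule AE_I2, rule impI)
    fix \<omega> assume H: "\<forall>N. \<exists>n\<ge>N. n \<ge> 1 \<and> \<omega> \<in> E n"
    let ?f = "\<lambda>n::nat. ereal (real (kLambda k (\<lambda>i m. X i m \<omega>) (int n)))"
    have "liminf ?f \<le> ereal (real k)"
      unfolding liminf_SUP_INF
    proof (rule SUP_least)
      fix N
      obtain n where n: "n \<ge> N" "n \<ge> 1" "\<omega> \<in> E n" using H by blast
      have "kLambda k (\<lambda>i m. X i m \<omega>) (int n) \<le> k"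
        using n by (intro tree_small) (auto simp: E_def)
      then have "?f n \<le> ereal (real k)" by simp
      then show "(INF m\<in>{N..}. ?f m) \<le> ereal (real k)"
        using n by (intro INF_lower2[of n]) auto
    qed
    moreover have "ereal (real k) < \<infinity>" by simp
    ultimately show "liminf ?f < \<infinity>" by (rule order_le_less_trans)
  qed
qed

end
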